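(* Let $\mathbf{L}$ be an intermediate propositional logic with $\vdash_{\mathbf{L}}\lnot A\lor\lnot\lnot A$. Then for every derivation $\pi$ in $\varepsilon\tau(\mathbf{L})$ whose end formula is a negation $\lnot D$, every critical $\varepsilon\tau$-term $e$ of $\pi$ has a complete $e$-elimination set.
   Context: Intermediate propositional logic: contains intuitionistic, contained in classical propositional logic, closed under modus ponens and substitution. $\varepsilon\tau$-terms: $\varepsilon x\,A(x)$, $\tau x\,A(x)$. Critical formulas: $A(t)\to A(\varepsilon x\,A(x))$ (belonging to $\varepsilon x\,A(x)$) and $A(\tau x\,A(x))\to A(t)$ (belonging to $\tau x\,A(x)$). A derivation $\pi$ in $\varepsilon\tau(\mathbf{L})$ is a derivation in the quantifier-free language with $\varepsilon\tau$-terms from a finite set of critical formulas using substitution instances of theorems of $\mathbf{L}$ and modus ponens; $e$ is a critical term of $\pi$ if a critical formula used in $\pi$ belongs to $e$. Write the critical formulas of $\pi$ as $\Gamma\cup\Lambda(e)$, $\Lambda(e)$ those belonging to $e$, and the end formula as $D'(e)$. $\{s_1,\dots,s_k\}$ is a complete $e$-elimination set if $\Gamma[s_1/e],\dots,\Gamma[s_k/e]\vdash_{\mathbf{L}}D'(s_1)\lor\dots\lor D'(s_k)$, where $[s/e]$ replaces every occurrence of $e$ by $s$ and $\vdash_{\mathbf{L}}$ is derivability from assumptions by substitution instances of theorems of $\mathbf{L}$ and modus ponens. *)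

theory Defs
  imports Main
begin

datatype pfrm = PVar nat | PBot | PImp pfrm pfrm | PAnd pfrm pfrm | POr pfrm pfrm

definition PNeg :: "pfrm \<Rightarrow> pfrm" where "PNeg A = PImp A PBot"

primrec psubst :: "(nat \<Rightarrow> pfrm) \<Rightarrow> pfrm \<Rightarrow> pfrm" where
  "psubst \<sigma> (PVar n) = \<sigma> n"
| "psubst \<sigma> PBot = PBot"
| "psubst \<sigma> (PImp A B) = PImp (psubst \<sigma> A) (psubst \<sigma> B)"
| "psubst \<sigma> (PAnd A B) = PAnd (psubst \<sigma> A) (psubst \<sigma> B)"
| "psubst \<sigma> (POr A B) = POr (psubst \<sigma> A) (psubst \<sigma> B)"

inductive ipc :: "pfrm \<Rightarrow> bool" where
  K: "ipc (PImp A (PImp B A))"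
| S: "ipc (PImp (PImp A (PImp B C)) (PImp (PImp A B) (PImp A C)))"
| AndE1: "ipc (PImp (PAnd A B) A)"
| AndE2: "ipc (PImp (PAnd A B) B)"
| AndI: "ipc (PImp A (PImp B (PAnd A B)))"
| OrI1: "ipc (PImp A (POr A B))"
| OrI2: "ipc (PImp B (POr A B))"
| OrE: "ipc (PImp (PImp A C) (PImp (PImp B C) (PImp (POr A B) C)))"
| EFQ: "ipc (PImp PBot A)"
| MP: "ipc (PImp A B) \<Longrightarrow> ipc A \<Longrightarrow> ipc B"

primrec peval :: "(nat \<Rightarrow> bool) \<Rightarrow> pfrm \<Rightarrow> bool" where
  "peval v (PVar n) = v n"
| "peval v PBot = False"
| "peval v (PImp A B) = (peval v A \<longrightarrow> peval v B)"
| "peval v (PAnd A B) = (peval v A \<and> peval v B)"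
| "peval v (POr A B) = (peval v A \<or> peval v B)"

definition tautology :: "pfrm \<Rightarrow> bool" where
  "tautology A \<longleftrightarrow> (\<forall>v. peval v A)"

definition intermediate_logic :: "pfrm set \<Rightarrow> bool" where
  "intermediate_logic L \<longleftrightarrow>
     (\<forall>A. ipc A \<longrightarrow> A \<in> L) \<and>
     (\<forall>A\<in>L. tautology A) \<and>
     (\<forall>A B. PImp A B \<in> L \<longrightarrow> A \<in> L \<longrightarrow> B \<in> L) \<and>
     (\<forall>\<sigma> A. A \<in> L \<longrightarrow> psubst \<sigma> A \<in> L)"

section \<open>Quantifier-free language with epsilon/tau terms (locally nameless, de Bruijn bound variables)\<close>

datatype trm = BVar nat | FVar nat | Fn nat "trm list" | Eps frm | Tau frm
     and frm = Pred nat "trm list" | Bot | Imp frm frm | And frm frm | Or frm frm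

definition Neg :: "frm \<Rightarrow> frm" where "Neg A = Imp A Bot"

text \<open>Local closedness (well-formedness): no dangling bound variables.
  In \<open>Eps A\<close> / \<open>Tau A\<close> the bound variable of the binder is index 0 of \<open>A\<close>.\<close>
primrec lcT :: "nat \<Rightarrow> trm \<Rightarrow> bool" and lcF :: "nat \<Rightarrow> frm \<Rightarrow> bool" where
  "lcT d (BVar k) = (k < d)"
| "lcT d (FVar x) = True"
| "lcT d (Fn f ts) = list_all (lcT d) ts"
| "lcT d (Eps A) = lcF (Suc d) A"
| "lcT d (Tau A) = lcF (Suc d) A"
| "lcF d (Pred p ts) = list_all (lcT d) ts"
| "lcF d Bot = True"
| "lcF d (Imp A B) = (lcF d A \<and> lcF d B)"
| "lcF d (And A B) = (lcF d A \<and> lcF d B)"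
| "lcF d (Or A B) = (lcF d A \<and> lcF d B)"

primrec instT :: "nat \<Rightarrow> trm \<Rightarrow> trm \<Rightarrow> trm" and instF :: "nat \<Rightarrow> trm \<Rightarrow> frm \<Rightarrow> frm" where
  "instT d t (BVar k) = (if k = d then t else BVar k)"
| "instT d t (FVar x) = FVar x"
| "instT d t (Fn f ts) = Fn f (map (instT d t) ts)"
| "instT d t (Eps A) = Eps (instF (Suc d) t A)"
| "instT d t (Tau A) = Tau (instF (Suc d) t A)"
| "instF d t (Pred p ts) = Pred p (map (instT d t) ts)"
| "instF d t Bot = Bot"
| "instF d t (Imp A B) = Imp (instF d t A) (instF d t B)"
| "instF d t (And A B) = And (instF d t A) (instF d t B)"
| "instF d t (Or A B) = Or (instF d t A) (instF d t B)"

abbreviation app :: "frm \<Rightarrow> trm \<Rightarrow> frm" where "app A t \<equiv> instF 0 t A"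

primrec replT :: "trm \<Rightarrow> trm \<Rightarrow> trm \<Rightarrow> trm" and replF :: "trm \<Rightarrow> trm \<Rightarrow> frm \<Rightarrow> frm" where
  "replT e s (BVar k) = (if BVar k = e then s else BVar k)"
| "replT e s (FVar x) = (if FVar x = e then s else FVar x)"
| "replT e s (Fn f ts) = (if Fn f ts = e then s else Fn f (map (replT e s) ts))"
| "replT e s (Eps A) = (if Eps A = e then s else Eps (replF e s A))"
| "replT e s (Tau A) = (if Tau A = e then s else Tau (replF e s A))"
| "replF e s (Pred p ts) = Pred p (map (replT e s) ts)"
| "replF e s Bot = Bot"
| "replF e s (Imp A B) = Imp (replF e s A) (replF e s B)"
| "replF e s (And A B) = And (replF e s A) (replF e s B)"
| "replF e s (Or A B) = Or (replF e s A) (replF e s B)"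

primrec inst_prop :: "(nat \<Rightarrow> frm) \<Rightarrow> pfrm \<Rightarrow> frm" where
  "inst_prop \<sigma> (PVar n) = \<sigma> n"
| "inst_prop \<sigma> PBot = Bot"
| "inst_prop \<sigma> (PImp A B) = Imp (inst_prop \<sigma> A) (inst_prop \<sigma> B)"
| "inst_prop \<sigma> (PAnd A B) = And (inst_prop \<sigma> A) (inst_prop \<sigma> B)"
| "inst_prop \<sigma> (POr A B) = Or (inst_prop \<sigma> A) (inst_prop \<sigma> B)"

definition L_instance :: "pfrm set \<Rightarrow> frm \<Rightarrow> bool" where
  "L_instance L F \<longleftrightarrow> (\<exists>P \<sigma>. P \<in> L \<and> (\<forall>n. lcF 0 (\<sigma> n)) \<and> F = inst_prop \<sigma> P)"

definition belongs :: "frm \<Rightarrow> trm \<Rightarrow> bool" where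
  "belongs F e \<longleftrightarrow>
     (\<exists>A t. e = Eps A \<and> lcT 0 e \<and> lcT 0 t \<and> F = Imp (app A t) (app A (Eps A))) \<or>
     (\<exists>A t. e = Tau A \<and> lcT 0 e \<and> lcT 0 t \<and> F = Imp (app A (Tau A)) (app A t))"

definition critical :: "frm \<Rightarrow> bool" where
  "critical F \<longleftrightarrow> (\<exists>e. belongs F e)"

datatype just = JCrit | JInst | JMP nat nat

text \<open>A derivation is a nonempty list of lines (formula, justification): a critical formula,
  a substitution instance of a theorem of L, or modus ponens from two earlier lines
  (line j is \<open>line i \<longrightarrow> this line\<close>).\<close>
definition derivation :: "pfrm set \<Rightarrow> (frm \<times> just) list \<Rightarrow> bool" where
  "derivation L \<pi> \<longleftrightarrow> \<pi> \<noteq> [] \<and>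
     (\<forall>k < length \<pi>. case snd (\<pi> ! k) of
         JCrit \<Rightarrow> critical (fst (\<pi> ! k))
       | JInst \<Rightarrow> L_instance L (fst (\<pi> ! k))
       | JMP i j \<Rightarrow> i < k \<and> j < k \<and> fst (\<pi> ! j) = Imp (fst (\<pi> ! i)) (fst (\<pi> ! k)))"

definition end_formula :: "(frm \<times> just) list \<Rightarrow> frm" where
  "end_formula \<pi> = fst (last \<pi>)"

definition critical_formulas :: "(frm \<times> just) list \<Rightarrow> frm set" where
  "critical_formulas \<pi> = {fst (\<pi> ! k) |k. k < length \<pi> \<and> snd (\<pi> ! k) = JCrit}"

definition critical_terms :: "(frm \<times> just) list \<Rightarrow> trm set" where
  "critical_terms \<pi> = {e. \<exists>F\<in>critical_formulas \<pi>. belongs F e}"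

definition Gamma :: "(frm \<times> just) list \<Rightarrow> trm \<Rightarrow> frm set" where
  "Gamma \<pi> e = {F \<in> critical_formulas \<pi>. \<not> belongs F e}"

inductive derives :: "pfrm set \<Rightarrow> frm set \<Rightarrow> frm \<Rightarrow> bool" for L where
  Assm: "F \<in> H \<Longrightarrow> derives L H F"
| Inst: "L_instance L F \<Longrightarrow> derives L H F"
| MP: "derives L H (Imp F G) \<Longrightarrow> derives L H F \<Longrightarrow> derives L H G"

fun bigOr :: "frm list \<Rightarrow> frm" where
  "bigOr [] = Bot"
| "bigOr [F] = F"
| "bigOr (F # Fs) = Or F (bigOr Fs)"

definition complete_elim_set :: "pfrm set \<Rightarrow> (frm \<times> just) list \<Rightarrow> trm \<Rightarrow> trm list \<Rightarrow> bool" where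
  "complete_elim_set L \<pi> e ss \<longleftrightarrow> ss \<noteq> [] \<and> (\<forall>s\<in>set ss. lcT 0 s) \<and>
     derives L (\<Union>s\<in>set ss. replF e s ` Gamma \<pi> e)
       (bigOr (map (\<lambda>s. replF e s (end_formula \<pi>)) ss))"

end

theory Submission
  imports Defs
begin


lemma inst_size':
  "(\<forall>d. instT d t u \<noteq> u \<longrightarrow> size t \<le> size (instT d t u)) \<and>
   (\<forall>d. instF d t B \<noteq> B \<longrightarrow> size t \<le> size (instF d t B))"
proof (induct rule: trm_frm.induct)
  case (Fn f ts)
  show ?case
  proof (intro allI impI)
    fix d
    assume "instT d t (Fn f ts) \<noteq> Fn f ts"
    then obtain x where x: "x \<in> set ts" "instT d t x \<noteq> x"
      using map_idI[of ts "instT d t"] by auto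
    then have "size t \<le> size (instT d t x)" using Fn by blast
    then have "size t \<le> size_list size (map (instT d t) ts)"
      using x(1) by (simp add: size_list_estimation')
    then show "size t \<le> size (instT d t (Fn f ts))" by simp
  qed
next
  case (Pred p ts)
  show ?case
  proof (intro allI impI)
    fix d
    assume "instF d t (Pred p ts) \<noteq> Pred p ts"
    then obtain x where x: "x \<in> set ts" "instT d t x \<noteq> x"
      using map_idI[of ts "instT d t"] by auto
    then have "size t \<le> size (instT d t x)" using Pred by blast
    then have "size t \<le> size_list size (map (instT d t) ts)"
      using x(1) by (simp add: size_list_estimation')
    then show "size t \<le> size (instF d t (Pred p ts))" by simp
  qed
qed auto

lemma inst_sizeF: "instF d t B \<noteq> B \<Longrightarrow> size t \<le> size (instF d t B)"
  using inst_size' by blast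

lemma repl_inst':
  assumes e: "e = Eps A \<or> e = Tau A"
  shows "(\<forall>d. size u < size e \<longrightarrow> replT e s (instT d e u) = instT d s u) \<and>
         (\<forall>d. size B < size e \<longrightarrow> replF e s (instF d e B) = instF d s B)"
proof (induct rule: trm_frm.induct)
  case (BVar k)
  then show ?case using e by auto
next
  case (FVar x)
  then show ?case using e by auto
next
  case (Fn f ts)
  show ?case
  proof (intro allI impI)
    fix d assume sz: "size (Fn f ts) < size e"
    then have "\<forall>x\<in>set ts. size x < size e"
    proof (intro ballI)
      fix x assume "x \<in> set ts"
      then have "size x \<le> size_list size ts" by (rule size_list_estimation') simp
      then show "size x < size e" using sz by simp
    qed
    then show "replT e s (instT d e (Fn f ts)) = instT d s (Fn f ts)" using Fn e by auto
  qed
next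
  case (Eps B)
  show ?case
  proof (intro allI impI)
    fix d assume sz: "size (Eps B) < size e"
  have ne: "Eps (instF (Suc d) e B) \<noteq> e"
  proof
    assume h: "Eps (instF (Suc d) e B) = e"
    then have eA: "e = Eps A" and iA: "instF (Suc d) e B = A" using e by auto
    have "size B < size A" using sz eA by simp
    show False
    proof (cases "instF (Suc d) e B = B")
      case True then show False using iA \<open>size B < size A\<close> by simp
    next
      case False
      then have "size e \<le> size (instF (Suc d) e B)" using inst_sizeF by blast
      then show False using iA eA by simp
    qed
  qed
  then show "replT e s (instT d e (Eps B)) = instT d s (Eps B)" using Eps sz by auto
  qed
next
  case (Tau B)
  show ?case
  proof (intro allI impI)
    fix d assume sz: "size (Tau B) < size e"
  have ne: "Tau (instF (Suc d) e B) \<noteq> e"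
  proof
    assume h: "Tau (instF (Suc d) e B) = e"
    then have eA: "e = Tau A" and iA: "instF (Suc d) e B = A" using e by auto
    have "size B < size A" using sz eA by simp
    show False
    proof (cases "instF (Suc d) e B = B")
      case True then show False using iA \<open>size B < size A\<close> by simp
    next
      case False
      then have "size e \<le> size (instF (Suc d) e B)" using inst_sizeF by blast
      then show False using iA eA by simp
    qed
  qed
  then show "replT e s (instT d e (Tau B)) = instT d s (Tau B)" using Tau sz by auto
  qed
next
  case (Pred p ts)
  show ?case
  proof (intro allI impI)
    fix d assume sz: "size (Pred p ts) < size e"
    then have "\<forall>x\<in>set ts. size x < size e"
    proof (intro ballI)
      fix x assume "x \<in> set ts"
      then have "size x \<le> size_list size ts" by (rule size_list_estimation') simp
      then show "size x < size e" using sz by simp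
    qed
    then show "replF e s (instF d e (Pred p ts)) = instF d s (Pred p ts)" using Pred e by auto
  qed
qed auto

lemma repl_app: "e = Eps A \<or> e = Tau A \<Longrightarrow> replF e s (app A e) = app A s"
  using repl_inst'[of e A s _ A] by auto

lemma repl_id': "replT e e u = u \<and> replF e e B = B"
  by (induct rule: trm_frm.induct) (auto simp: map_idI)

lemma repl_id: "replF e e B = B" using repl_id' by blast

lemma lc_mono': "(\<forall>d d'. lcT d u \<longrightarrow> d \<le> d' \<longrightarrow> lcT d' u) \<and> (\<forall>d d'. lcF d B \<longrightarrow> d \<le> d' \<longrightarrow> lcF d' B)"
  by (induct rule: trm_frm.induct) (auto simp: list_all_iff)

lemma lcT_mono: "lcT d u \<Longrightarrow> d \<le> d' \<Longrightarrow> lcT d' u" using lc_mono' by blast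

lemma lc_repl': "(\<forall>d. lcT d u \<longrightarrow> lcT 0 s \<longrightarrow> lcT d (replT e s u)) \<and>
   (\<forall>d. lcF d B \<longrightarrow> lcT 0 s \<longrightarrow> lcF d (replF e s B))"
  by (induct rule: trm_frm.induct[where ?P1.0="\<lambda>u. \<forall>d. lcT d u \<longrightarrow> lcT 0 s \<longrightarrow> lcT d (replT e s u)"
      and ?P2.0="\<lambda>B. \<forall>d. lcF d B \<longrightarrow> lcT 0 s \<longrightarrow> lcF d (replF e s B)"]) (auto simp: list_all_iff intro: lcT_mono)

lemma lc_repl: "lcF d B \<Longrightarrow> lcT 0 s \<Longrightarrow> lcF d (replF e s B)" using lc_repl' by blast

lemma lc_inst': "(\<forall>d. lcT (Suc d) u \<longrightarrow> lcT 0 t \<longrightarrow> lcT d (instT d t u)) \<and>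
   (\<forall>d. lcF (Suc d) B \<longrightarrow> lcT 0 t \<longrightarrow> lcF d (instF d t B))"
  by (induct rule: trm_frm.induct) (auto simp: list_all_iff intro: lcT_mono)

lemma lc_inst: "lcF (Suc d) B \<Longrightarrow> lcT 0 t \<Longrightarrow> lcF d (instF d t B)" using lc_inst' by blast

lemma lc_inst_prop: "(\<forall>n. lcF 0 (\<sigma> n)) \<Longrightarrow> lcF 0 (inst_prop \<sigma> P)"
  by (induction P) auto

lemma repl_inst_prop: "replF e s (inst_prop \<sigma> P) = inst_prop (\<lambda>n. replF e s (\<sigma> n)) P"
  by (induction P) auto

lemma L_instance_repl: "L_instance L F \<Longrightarrow> lcT 0 s \<Longrightarrow> L_instance L (replF e s F)"
  unfolding L_instance_def using repl_inst_prop lc_repl by metis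

lemma L_instance_lc: "L_instance L F \<Longrightarrow> lcF 0 F"
  unfolding L_instance_def using lc_inst_prop by blast

lemma belongs_lc: "belongs F e \<Longrightarrow> lcF 0 F"
  unfolding belongs_def by (auto intro!: lc_inst)



definition sig3 :: "frm \<Rightarrow> frm \<Rightarrow> frm \<Rightarrow> nat \<Rightarrow> frm" where
  "sig3 A B C n = (if n = 0 then A else if n = 1 then B else if n = 2 then C else Bot)"

lemma ax:
  assumes "intermediate_logic L" "ipc P" "lcF 0 A" "lcF 0 B" "lcF 0 C"
  shows "derives L H (inst_prop (sig3 A B C) P)"
proof (rule derives.Inst)
  have "P \<in> L" using assms(1,2) unfolding intermediate_logic_def by blast
  moreover have "\<forall>n. lcF 0 (sig3 A B C n)" using assms(3-5) by (simp add: sig3_def)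
  ultimately show "L_instance L (inst_prop (sig3 A B C) P)"
    unfolding L_instance_def by blast
qed

lemma dK: "intermediate_logic L \<Longrightarrow> lcF 0 A \<Longrightarrow> lcF 0 B \<Longrightarrow> derives L H (Imp A (Imp B A))"
  using ax[OF _ ipc.K[of "PVar 0" "PVar 1"], of L A B Bot H] by (simp add: sig3_def)

lemma dS: "intermediate_logic L \<Longrightarrow> lcF 0 A \<Longrightarrow> lcF 0 B \<Longrightarrow> lcF 0 C \<Longrightarrow>
   derives L H (Imp (Imp A (Imp B C)) (Imp (Imp A B) (Imp A C)))"
  using ax[OF _ ipc.S[of "PVar 0" "PVar 1" "PVar 2"], of L A B C H] by (simp add: sig3_def)

lemma dOrI1: "intermediate_logic L \<Longrightarrow> lcF 0 A \<Longrightarrow> lcF 0 B \<Longrightarrow> derives L H (Imp A (Or A B))"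
  using ax[OF _ ipc.OrI1[of "PVar 0" "PVar 1"], of L A B Bot H] by (simp add: sig3_def)

lemma dOrI2: "intermediate_logic L \<Longrightarrow> lcF 0 A \<Longrightarrow> lcF 0 B \<Longrightarrow> derives L H (Imp B (Or A B))"
  using ax[OF _ ipc.OrI2[where A="PVar 0" and B="PVar 1"], of L A B Bot H] by (simp add: sig3_def)

lemma dOrE: "intermediate_logic L \<Longrightarrow> lcF 0 A \<Longrightarrow> lcF 0 B \<Longrightarrow> lcF 0 C \<Longrightarrow>
   derives L H (Imp (Imp A C) (Imp (Imp B C) (Imp (Or A B) C)))"
  using ax[OF _ ipc.OrE[where A="PVar 0" and B="PVar 1" and C="PVar 2"], of L A B C H] by (simp add: sig3_def)

lemma dEFQ: "intermediate_logic L \<Longrightarrow> lcF 0 A \<Longrightarrow> derives L H (Imp Bot A)"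
  using ax[OF _ ipc.EFQ[of "PVar 0"], of L A Bot Bot H] by (simp add: sig3_def)

lemma dKC: "intermediate_logic L \<Longrightarrow> \<forall>A. POr (PNeg A) (PNeg (PNeg A)) \<in> L \<Longrightarrow> lcF 0 A \<Longrightarrow>
   derives L H (Or (Neg A) (Neg (Neg A)))"
proof -
  assume a: "\<forall>A. POr (PNeg A) (PNeg (PNeg A)) \<in> L" "lcF 0 A"
  have "\<forall>n. lcF 0 (sig3 A Bot Bot n)" using a by (simp add: sig3_def)
  then have "L_instance L (inst_prop (sig3 A Bot Bot) (POr (PNeg (PVar 0)) (PNeg (PNeg (PVar 0)))))"
    unfolding L_instance_def using a by blast
  then show ?thesis by (auto intro: derives.Inst simp: sig3_def PNeg_def Neg_def)
qed

lemma derives_lc: "derives L H F \<Longrightarrow> \<forall>h\<in>H. lcF 0 h \<Longrightarrow> lcF 0 F"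
  by (induction rule: derives.induct) (auto dest: L_instance_lc)

lemma weaken: "derives L H F \<Longrightarrow> H \<subseteq> H' \<Longrightarrow> derives L H' F"
  by (induction rule: derives.induct) (auto intro: derives.intros)

lemma cut_set: "derives L H' F \<Longrightarrow> H' \<subseteq> H \<union> S \<Longrightarrow> \<forall>G\<in>S. derives L H G \<Longrightarrow> derives L H F"
  by (induction rule: derives.induct) (auto intro: derives.intros)

lemma dI: "intermediate_logic L \<Longrightarrow> lcF 0 A \<Longrightarrow> derives L H (Imp A A)"
proof -
  assume il: "intermediate_logic L" and a: "lcF 0 A"
  have "derives L H (Imp (Imp A (Imp (Imp A A) A)) (Imp (Imp A (Imp A A)) (Imp A A)))"
    using dS[OF il a _ a] a by simp
  moreover have "derives L H (Imp A (Imp (Imp A A) A))" using dK[OF il a] a by simp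
  moreover have "derives L H (Imp A (Imp A A))" using dK[OF il a a] .
  ultimately show ?thesis by (meson derives.MP)
qed

lemma deduct_aux:
  assumes il: "intermediate_logic L"
  shows "derives L H' B \<Longrightarrow> H' = insert A H \<Longrightarrow> lcF 0 A \<Longrightarrow> \<forall>h\<in>H. lcF 0 h \<Longrightarrow> derives L H (Imp A B)"
proof (induction rule: derives.induct)
  case (Assm F)
  show ?case
  proof (cases "F = A")
    case True then show ?thesis using dI[OF il] Assm by simp
  next
    case False
    then have "F \<in> H" using Assm by auto
    then show ?thesis using dK[OF il, of F A H] Assm by (meson derives.Assm derives.MP)
  qed
next
  case (Inst F)
  then show ?case using dK[OF il, of F A H] L_instance_lc by (meson derives.Inst derives.MP)
next
  case (MP H0 F G)
  have lcH: "\<forall>h\<in>insert A H. lcF 0 h" using MP.prems by auto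
  have "lcF 0 (Imp F G)" using derives_lc[OF _ lcH] MP.hyps(1) MP.prems(1) by blast
  then have lc: "lcF 0 F" "lcF 0 G" by auto
  have "derives L H (Imp (Imp A (Imp F G)) (Imp (Imp A F) (Imp A G)))"
    using dS[OF il _ lc] MP by simp
  then show ?case using MP by (meson derives.MP)
qed

lemma deduct: "intermediate_logic L \<Longrightarrow> derives L (insert A H) B \<Longrightarrow> lcF 0 A \<Longrightarrow> \<forall>h\<in>H. lcF 0 h \<Longrightarrow> derives L H (Imp A B)"
  using deduct_aux by blast

lemma cut1: "derives L (insert A H) B \<Longrightarrow> derives L H A \<Longrightarrow> derives L H B"
  using cut_set[of L "insert A H" B H "{A}"] by auto

lemma orE:
  assumes il: "intermediate_logic L" and lcH: "\<forall>h\<in>H. lcF 0 h" and lc: "lcF 0 A" "lcF 0 B" "lcF 0 C"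
    and d: "derives L H (Or A B)" "derives L (insert A H) C" "derives L (insert B H) C"
  shows "derives L H C"
proof -
  have 1: "derives L H (Imp A C)" using deduct[OF il d(2) lc(1) lcH] .
  have 2: "derives L H (Imp B C)" using deduct[OF il d(3) lc(2) lcH] .
  show ?thesis using dOrE[OF il lc, of H] 1 2 d(1) by (meson derives.MP)
qed

lemma lc_bigOr: "\<forall>x\<in>set Fs. lcF 0 x \<Longrightarrow> lcF 0 (bigOr Fs)"
  by (induction Fs rule: bigOr.induct) auto

lemma bigOr_intro: "intermediate_logic L \<Longrightarrow> X \<in> set Fs \<Longrightarrow> \<forall>x\<in>set Fs. lcF 0 x \<Longrightarrow> derives L H X \<Longrightarrow> derives L H (bigOr Fs)"
proof (induction Fs rule: bigOr.induct)
  case 1 then show ?case by simp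
next
  case (2 F) then show ?case by simp
next
  case (3 F G Fs)
  have lcr: "lcF 0 (bigOr (G # Fs))" using 3 lc_bigOr by simp
  have lcF: "lcF 0 F" using 3 by simp
  show ?case
  proof (cases "X = F")
    case True
    then show ?thesis using dOrI1[OF 3(2) lcF lcr, of H] 3 by (auto intro: derives.MP)
  next
    case False
    then have "derives L H (bigOr (G # Fs))" using 3 by auto
    then show ?thesis using dOrI2[OF 3(2) lcF lcr, of H] by (auto intro: derives.MP)
  qed
qed



lemma mp2: "derives L H (Imp A B) \<Longrightarrow> derives L H A \<Longrightarrow> derives L H B"
  by (rule derives.MP)

lemma G1:
  assumes il: "intermediate_logic L" and lcH: "\<forall>h\<in>H. lcF 0 h" and lc: "lcF 0 X" "lcF 0 Z"
    and d1: "derives L (insert X H) (Neg Z)" and d2: "derives L H (Neg (Neg X))"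
  shows "derives L H (Neg Z)"
proof -
  have "derives L (insert X (insert Z H)) (Imp Z Bot)"
    using weaken[OF d1, of "insert X (insert Z H)"] unfolding Neg_def by auto
  moreover have "derives L (insert X (insert Z H)) Z" by (rule derives.Assm) simp
  ultimately have "derives L (insert X (insert Z H)) Bot"
    by (rule mp2)
  then have "derives L (insert Z H) (Imp X Bot)"
    using deduct[OF il _ lc(1)] lcH lc by auto
  moreover have "derives L (insert Z H) (Imp (Imp X Bot) Bot)"
    using weaken[OF d2, of "insert Z H"] unfolding Neg_def by auto
  ultimately have "derives L (insert Z H) Bot" using mp2 by blast
  then show ?thesis using deduct[OF il _ lc(2) lcH] unfolding Neg_def by blast
qed

lemma NN:
  assumes il: "intermediate_logic L"
  shows "derives L (H \<union> set Fs) (Neg Z) \<Longrightarrow> \<forall>F\<in>set Fs. lcF 0 F \<and> derives L H (Neg (Neg F)) \<Longrightarrow>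
    \<forall>h\<in>H. lcF 0 h \<Longrightarrow> lcF 0 Z \<Longrightarrow> derives L H (Neg Z)"
proof (induction Fs arbitrary: H)
  case Nil then show ?case by simp
next
  case (Cons F Fs)
  have "derives L (insert F H) (Neg Z)"
  proof (rule Cons.IH)
    show "derives L (insert F H \<union> set Fs) (Neg Z)" using Cons.prems(1) by simp
    show "\<forall>F'\<in>set Fs. lcF 0 F' \<and> derives L (insert F H) (Neg (Neg F'))"
      using Cons.prems(2) by (auto intro: weaken)
    show "\<forall>h\<in>insert F H. lcF 0 h" using Cons.prems by auto
    show "lcF 0 Z" by fact
  qed
  then show ?case using G1[OF il] Cons.prems by auto
qed

lemma nnI:
  assumes il: "intermediate_logic L" and lcH: "\<forall>h\<in>H. lcF 0 h" and lc: "lcF 0 F"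
    and d: "derives L H F"
  shows "derives L H (Neg (Neg F))"
proof -
  have 1: "derives L (insert (Neg F) H) F" using weaken[OF d, of "insert (Neg F) H"] by auto
  have 2: "derives L (insert (Neg F) H) (Imp F Bot)" by (rule derives.Assm) (simp add: Neg_def)
  have "derives L (insert (Neg F) H) Bot" using mp2[OF 2 1] .
  then show ?thesis using deduct[OF il _ _ lcH] lc unfolding Neg_def by auto
qed

lemma neg_imp:
  assumes il: "intermediate_logic L" and lcH: "\<forall>h\<in>H. lcF 0 h" and lc: "lcF 0 X" "lcF 0 Y"
    and d: "derives L H (Neg X)"
  shows "derives L H (Imp X Y)"
proof -
  have 1: "derives L (insert X H) (Imp X Bot)" using weaken[OF d, of "insert X H"] by (auto simp: Neg_def)
  have 2: "derives L (insert X H) X" by (rule derives.Assm) simp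
  have "derives L (insert X H) Bot" using mp2[OF 1 2] .
  then have "derives L (insert X H) Y" using dEFQ[OF il lc(2)] mp2 by blast
  then show ?thesis using deduct[OF il _ lc(1) lcH] by blast
qed

lemma nnImp:
  assumes il: "intermediate_logic L" and lcH: "\<forall>h\<in>H. lcF 0 h" and lc: "lcF 0 X" "lcF 0 Y"
    and d: "derives L H (Neg (Neg X))"
  shows "derives L H (Neg (Neg (Imp Y X)))"
proof -
  let ?H1 = "insert (Neg (Imp Y X)) H"
  have lcH1: "\<forall>h\<in>?H1. lcF 0 h" using lcH lc by (auto simp: Neg_def)
  have 0: "derives L (insert X ?H1) X" by (rule derives.Assm) simp
  have 1: "derives L (insert X ?H1) (Imp Y X)"
    using mp2[OF dK[OF il lc(1) lc(2)] 0] .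
  have 2: "derives L (insert X ?H1) (Imp (Imp Y X) Bot)" by (rule derives.Assm) (simp add: Neg_def)
  have "derives L (insert X ?H1) Bot" using mp2[OF 2 1] .
  then have "derives L ?H1 (Imp X Bot)" using deduct[OF il _ lc(1) lcH1] by blast
  moreover have "derives L ?H1 (Imp (Imp X Bot) Bot)"
    using weaken[OF d, of ?H1] unfolding Neg_def by auto
  ultimately have "derives L ?H1 Bot" using mp2 by blast
  then show ?thesis using deduct[OF il _ _ lcH] lc unfolding Neg_def by auto
qed

lemma bigOr_elim:
  assumes il: "intermediate_logic L"
  shows "\<forall>h\<in>H. lcF 0 h \<Longrightarrow> lcF 0 C \<Longrightarrow> \<forall>x\<in>set Fs. lcF 0 x \<and> derives L (insert x H) C \<Longrightarrow>
    derives L (insert (bigOr Fs) H) C"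
proof (induction Fs rule: bigOr.induct)
  case 1
  have a: "derives L (insert Bot H) Bot" by (rule derives.Assm) simp
  show ?case using mp2[OF dEFQ[OF il 1(2)] a] by simp
next
  case (2 F)
  then show ?case by simp
next
  case (3 F G Fs)
  let ?B = "bigOr (G # Fs)"
  let ?H' = "insert (Or F ?B) H"
  have lcB: "lcF 0 ?B" using 3 lc_bigOr by simp
  have lcF: "lcF 0 F" using 3 by simp
  have lcH': "\<forall>h\<in>?H'. lcF 0 h" using 3 lcB lcF by auto
  have IH: "derives L (insert ?B H) C" by (rule 3(1)) (use 3(2-4) in auto)
  have dF: "derives L (insert F H) C" using 3(4) by simp
  have eq: "bigOr (F # G # Fs) = Or F ?B" by simp
  show ?case unfolding eq
  proof (rule orE[OF il lcH' lcF lcB \<open>lcF 0 C\<close>])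
    show "derives L ?H' (Or F ?B)" by (rule derives.Assm) simp
    show "derives L (insert F ?H') C" by (rule weaken[OF dF]) auto
    show "derives L (insert ?B ?H') C" by (rule weaken[OF IH]) auto
  qed
qed

lemma bigOr_mono:
  assumes il: "intermediate_logic L" and lcH: "\<forall>h\<in>H. lcF 0 h"
    and d: "derives L H (bigOr xs)" and sub: "set xs \<subseteq> set ys" and lcys: "\<forall>y\<in>set ys. lcF 0 y"
  shows "derives L H (bigOr ys)"
proof -
  have "derives L (insert (bigOr xs) H) (bigOr ys)"
  proof (rule bigOr_elim[OF il lcH])
    show "lcF 0 (bigOr ys)" using lc_bigOr lcys by blast
    show "\<forall>x\<in>set xs. lcF 0 x \<and> derives L (insert x H) (bigOr ys)"
    proof
      fix x assume x: "x \<in> set xs"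
      then have xy: "x \<in> set ys" using sub by auto
      have "derives L (insert x H) x" by (rule derives.Assm) simp
      then show "lcF 0 x \<and> derives L (insert x H) (bigOr ys)"
        using bigOr_intro[OF il xy lcys] xy lcys by blast
    qed
  qed
  then show ?thesis using cut1 d by blast
qed

lemma combine:
  assumes il: "intermediate_logic L" and kc: "\<forall>A. POr (PNeg A) (PNeg (PNeg A)) \<in> L"
  shows "\<forall>h\<in>H. lcF 0 h \<Longrightarrow> lcF 0 G0 \<Longrightarrow>
    \<forall>p\<in>set cs. lcF 0 (fst p) \<and> lcF 0 (snd p) \<and> derives L (insert (Neg (Neg (fst p))) H) (snd p) \<Longrightarrow>
    derives L (H \<union> set (map (\<lambda>p. Neg (fst p)) cs)) G0 \<Longrightarrow>
    derives L H (bigOr (G0 # map snd cs))"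
proof (induction cs arbitrary: H)
  case Nil then show ?case by simp
next
  case (Cons p cs)
  obtain c g where p: "p = (c, g)" by (cases p)
  have lcc: "lcF 0 c" "lcF 0 g" using Cons.prems p by auto
  have lcall: "\<forall>y\<in>set (G0 # g # map snd cs). lcF 0 y" using Cons.prems p by auto
  let ?C = "bigOr (G0 # g # map snd cs)"
  have lcC: "lcF 0 ?C" using lc_bigOr[OF lcall] .
  have "derives L H ?C"
  proof (rule orE[OF il Cons.prems(1) _ _ lcC])
    show "lcF 0 (Neg c)" "lcF 0 (Neg (Neg c))" using lcc by (auto simp: Neg_def)
    show "derives L H (Or (Neg c) (Neg (Neg c)))" using dKC[OF il kc lcc(1)] .
    have g: "derives L (insert (Neg (Neg c)) H) g" using Cons.prems(3) p by auto
    show "derives L (insert (Neg (Neg c)) H) ?C"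
      by (rule bigOr_intro[OF il _ lcall g]) simp
    have "derives L (insert (Neg c) H) (bigOr (G0 # map snd cs))"
    proof (rule Cons.IH)
      show "\<forall>h\<in>insert (Neg c) H. lcF 0 h" using Cons.prems(1) lcc by (auto simp: Neg_def)
      show "lcF 0 G0" by fact
      show "\<forall>p\<in>set cs. lcF 0 (fst p) \<and> lcF 0 (snd p) \<and>
          derives L (insert (Neg (Neg (fst p))) (insert (Neg c) H)) (snd p)"
        using Cons.prems(3) by (auto intro: weaken)
      have "insert (Neg c) H \<union> set (map (\<lambda>p. Neg (fst p)) cs) = H \<union> set (map (\<lambda>p. Neg (fst p)) (p # cs))"
        using p by auto
      then show "derives L (insert (Neg c) H \<union> set (map (\<lambda>p. Neg (fst p)) cs)) G0"
        using Cons.prems(4) by simp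
    qed
    moreover have "\<forall>h\<in>insert (Neg c) H. lcF 0 h" using Cons.prems(1) lcc by (auto simp: Neg_def)
    ultimately show "derives L (insert (Neg c) H) ?C"
      using bigOr_mono[OF il _ _ _ lcall] by (metis insert_subset list.set_intros(1) set_subset_Cons subset_insertI2 list.simps(15))
  qed
  then show ?case using p by simp
qed



lemma transport:
  assumes der: "derivation L \<pi>" and s: "lcT 0 s"
  shows "k < length \<pi> \<Longrightarrow> derives L (replF e s ` critical_formulas \<pi>) (replF e s (fst (\<pi> ! k)))"
proof (induction k rule: less_induct)
  case (less k)
  have line: "case snd (\<pi> ! k) of
         JCrit \<Rightarrow> critical (fst (\<pi> ! k))
       | JInst \<Rightarrow> L_instance L (fst (\<pi> ! k))
       | JMP i j \<Rightarrow> i < k \<and> j < k \<and> fst (\<pi> ! j) = Imp (fst (\<pi> ! i)) (fst (\<pi> ! k))"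
    using der less.prems unfolding derivation_def by blast
  show ?case
  proof (cases "snd (\<pi> ! k)")
    case JCrit
    then have "fst (\<pi> ! k) \<in> critical_formulas \<pi>"
      unfolding critical_formulas_def using less.prems by blast
    then show ?thesis by (auto intro: derives.Assm)
  next
    case JInst
    then have "L_instance L (fst (\<pi> ! k))" using line by simp
    then show ?thesis using L_instance_repl[OF _ s] by (blast intro: derives.Inst)
  next
    case (JMP i j)
    then have ij: "i < k" "j < k" "fst (\<pi> ! j) = Imp (fst (\<pi> ! i)) (fst (\<pi> ! k))" using line by auto
    have 1: "derives L (replF e s ` critical_formulas \<pi>) (replF e s (fst (\<pi> ! j)))"
      using less.IH[of j] ij less.prems by simp
    have 2: "derives L (replF e s ` critical_formulas \<pi>) (replF e s (fst (\<pi> ! i)))"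
      using less.IH[of i] ij less.prems by simp
    show ?thesis using mp2[OF _ 2] 1 ij(3) by simp
  qed
qed

lemma CF_lc: "F \<in> critical_formulas \<pi> \<Longrightarrow> derivation L \<pi> \<Longrightarrow> lcF 0 F"
  unfolding critical_formulas_def derivation_def critical_def
  using belongs_lc by fastforce

lemma CF_finite: "finite (critical_formulas \<pi>)"
proof -
  have "critical_formulas \<pi> \<subseteq> (\<lambda>k. fst (\<pi> ! k)) ` {k. k < length \<pi>}"
    unfolding critical_formulas_def by blast
  then show ?thesis using finite_subset by blast
qed

lemma lc_img: "\<forall>F\<in>X. lcF 0 F \<Longrightarrow> lcT 0 s \<Longrightarrow> \<forall>h\<in>replF e s ` X. lcF 0 h"
  using lc_repl by blast

lemma core:
  assumes il: "intermediate_logic L" and kc: "\<forall>A. POr (PNeg A) (PNeg (PNeg A)) \<in> L"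
    and der: "derivation L \<pi>" and endD: "end_formula \<pi> = Neg D" and elc: "lcT 0 e"
    and Lam: "Lam = {F \<in> critical_formulas \<pi>. belongs F e}"
    and Tlc: "\<forall>F\<in>Lam. lcT 0 (T F)" and Clc: "\<forall>F\<in>Lam. lcF 0 (C F)"
    and per: "\<forall>F\<in>Lam. \<forall>F'\<in>Lam. derives L (insert (C F) (replF e (T F) ` Gamma \<pi> e)) (replF e (T F) F')"
    and neg: "\<forall>F\<in>Lam. derives L {Neg (C F)} (Neg (Neg F))"
  shows "\<exists>ss. complete_elim_set L \<pi> e ss"
proof -
  have "finite Lam" using Lam CF_finite by auto
  then obtain lst where lst: "set lst = Lam" using finite_list by blast
  define ss where "ss = e # map T lst"
  define H where "H = (\<Union>s\<in>set ss. replF e s ` Gamma \<pi> e)"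
  define E where "E s = replF e s (end_formula \<pi>)" for s
  have sslc: "\<forall>s\<in>set ss. lcT 0 s" using ss_def Tlc lst elc by auto
  have CFlc: "\<forall>F\<in>critical_formulas \<pi>. lcF 0 F" using CF_lc der by blast
  have Glc: "\<forall>F\<in>Gamma \<pi> e. lcF 0 F" using CFlc unfolding Gamma_def by blast
  have Hlc: "\<forall>h\<in>H. lcF 0 h"
  proof
    fix h assume "h \<in> H"
    then obtain s where s: "s \<in> set ss" "h \<in> replF e s ` Gamma \<pi> e" unfolding H_def by blast
    show "lcF 0 h" using lc_img[OF Glc, of s e] s sslc by blast
  qed
  have CF: "critical_formulas \<pi> = Gamma \<pi> e \<union> Lam" unfolding Gamma_def Lam by blast
  have last: "end_formula \<pi> = fst (\<pi> ! (length \<pi> - 1))" "length \<pi> - 1 < length \<pi>"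
    using der unfolding end_formula_def derivation_def by (auto simp: last_conv_nth)
  have K1: "derives L (replF e s ` critical_formulas \<pi>) (E s)" if "lcT 0 s" for s
    using transport[OF der that last(2)] last(1) unfolding E_def by simp
  have Elc: "lcF 0 (E s)" if "lcT 0 s" for s
    using derives_lc[OF K1[OF that] lc_img[OF CFlc that]] .
  have EN: "E s = Neg (replF e s D)" for s unfolding E_def endD by (simp add: Neg_def)
  have Dlc: "lcF 0 (replF e s D)" if "lcT 0 s" for s using Elc[OF that] EN by (simp add: Neg_def)
  have Ee: "E e = Neg D" unfolding E_def endD by (simp add: repl_id)
  have GH: "replF e s ` Gamma \<pi> e \<subseteq> H" if "s \<in> set ss" for s unfolding H_def using that by blast
  have case1: "derives L (insert (Neg (Neg (C F))) H) (E (T F))" if F: "F \<in> Lam" for F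
  proof -
    let ?t = "T F"
    have tlc: "lcT 0 ?t" using Tlc F by blast
    have tss: "?t \<in> set ss" unfolding ss_def using F lst by auto
    have a: "derives L (insert (C F) (replF e ?t ` Gamma \<pi> e)) (E ?t)"
    proof (rule cut_set[OF K1[OF tlc], of _ "replF e ?t ` Lam"])
      show "replF e ?t ` critical_formulas \<pi> \<subseteq> insert (C F) (replF e ?t ` Gamma \<pi> e) \<union> replF e ?t ` Lam"
        unfolding CF by blast
      show "\<forall>G\<in>replF e ?t ` Lam. derives L (insert (C F) (replF e ?t ` Gamma \<pi> e)) G"
        using per F by blast
    qed
    let ?H = "insert (Neg (Neg (C F))) H"
    have cF: "lcF 0 (C F)" using Clc F by blast
    have lcH: "\<forall>h\<in>?H. lcF 0 h" using Hlc cF by (auto simp: Neg_def)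
    have a'': "derives L (insert (C F) ?H) (E ?t)"
      by (rule weaken[OF a]) (use GH[OF tss] in auto)
    have a': "derives L (insert (C F) ?H) (Neg (replF e ?t D))"
      using a'' EN by simp
    have b: "derives L ?H (Neg (Neg (C F)))" by (rule derives.Assm) simp
    show ?thesis using G1[OF il lcH cF Dlc[OF tlc] a' b] EN by simp
  qed
  let ?H0 = "H \<union> set (map (\<lambda>p. Neg (fst p)) (map (\<lambda>F. (C F, E (T F))) lst))"
  have H0eq: "?H0 = H \<union> (\<lambda>F. Neg (C F)) ` Lam" using lst by auto
  have case0: "derives L ?H0 (E e)"
  proof -
    have lcH0: "\<forall>h\<in>?H0. lcF 0 h" unfolding H0eq using Hlc Clc by (auto simp: Neg_def)
    have Gsub: "Gamma \<pi> e \<subseteq> H" using GH[of e] unfolding ss_def by (simp add: repl_id)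
    have "derives L (critical_formulas \<pi>) (Neg D)" using K1[OF elc] Ee by (simp add: repl_id)
    then have c1: "derives L (?H0 \<union> set lst) (Neg D)"
      by (rule weaken) (use Gsub CF lst in auto)
    have c2: "\<forall>F\<in>set lst. lcF 0 F \<and> derives L ?H0 (Neg (Neg F))"
    proof
      fix F assume "F \<in> set lst"
      then have F: "F \<in> Lam" using lst by simp
      have "lcF 0 F" using F CFlc Lam by blast
      moreover have "derives L ?H0 (Neg (Neg F))"
        unfolding H0eq by (rule weaken[OF neg[rule_format, OF F]]) (use F in auto)
      ultimately show "lcF 0 F \<and> derives L ?H0 (Neg (Neg F))" by blast
    qed
    have lcD: "lcF 0 D" using Elc[OF elc] Ee by (simp add: Neg_def)
    have "derives L ?H0 (Neg D)"
      using NN[OF il c1 c2 lcH0 lcD] .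
    then show ?thesis using Ee by simp
  qed
  have "derives L H (bigOr (E e # map snd (map (\<lambda>F. (C F, E (T F))) lst)))"
  proof (rule combine[OF il kc Hlc Elc[OF elc]])
    show "\<forall>p\<in>set (map (\<lambda>F. (C F, E (T F))) lst). lcF 0 (fst p) \<and> lcF 0 (snd p) \<and>
        derives L (insert (Neg (Neg (fst p))) H) (snd p)"
      using case1 Clc Elc Tlc lst by auto
    show "derives L ?H0 (E e)" by (rule case0)
  qed
  then have "derives L H (bigOr (map E ss))" unfolding ss_def by (simp add: comp_def)
  then have "complete_elim_set L \<pi> e ss"
    unfolding complete_elim_set_def H_def E_def using sslc ss_def by simp
  then show ?thesis by blast
qed

lemma app_lc: "lcT 0 (Eps A) \<or> lcT 0 (Tau A) \<Longrightarrow> lcT 0 t \<Longrightarrow> lcF 0 (app A t)"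
  using lc_inst by auto

theorem mainTheorem14:
  fixes L :: "pfrm set" and \<pi> :: "(frm \<times> just) list" and D :: frm and e :: trm
  assumes "intermediate_logic L"
    and "\<forall>A. POr (PNeg A) (PNeg (PNeg A)) \<in> L"
    and "derivation L \<pi>"
    and "end_formula \<pi> = Neg D"
    and "e \<in> critical_terms \<pi>"
  shows "\<exists>ss. complete_elim_set L \<pi> e ss"
proof -
  note il = assms(1) and kc = assms(2) and der = assms(3) and endD = assms(4)
  define Lam where "Lam = {F \<in> critical_formulas \<pi>. belongs F e}"
  obtain F0 where "belongs F0 e" using assms(5) unfolding critical_terms_def by blast
  then obtain A where eA: "e = Eps A \<or> e = Tau A" and elc: "lcT 0 e"
    unfolding belongs_def by blast
  have CFlc: "\<forall>F\<in>critical_formulas \<pi>. lcF 0 F" using CF_lc der by blast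
  have Glc: "\<forall>F\<in>replF e s ` Gamma \<pi> e. lcF 0 F" if "lcT 0 s" for s
    using CFlc lc_repl[OF _ that] unfolding Gamma_def by blast
  have eAlc: "lcF 0 (app A e)" using app_lc eA elc by metis
  show ?thesis
  proof (cases "e = Eps A")
    case True
    have bel: "\<exists>t. lcT 0 t \<and> F = Imp (app A t) (app A e)" if "F \<in> Lam" for F
      using that True unfolding Lam_def belongs_def by auto
    define T where "T F = (SOME t. lcT 0 t \<and> F = Imp (app A t) (app A e))" for F
    have T: "lcT 0 (T F) \<and> F = Imp (app A (T F)) (app A e)" if "F \<in> Lam" for F
      unfolding T_def using someI_ex[OF bel[OF that]] .
    define C where "C F = app A (T F)" for F
    have Clc: "lcF 0 (C F)" if "F \<in> Lam" for F
      unfolding C_def using app_lc eA elc T[OF that] by metis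
    show ?thesis
    proof (rule core[OF il kc der endD elc Lam_def])
      show "\<forall>F\<in>Lam. lcT 0 (T F)" using T by blast
      show "\<forall>F\<in>Lam. lcF 0 (C F)" using Clc by blast
      show "\<forall>F\<in>Lam. \<forall>F'\<in>Lam. derives L (insert (C F) (replF e (T F) ` Gamma \<pi> e)) (replF e (T F) F')"
      proof (intro ballI)
        fix F F' assume F: "F \<in> Lam" and F': "F' \<in> Lam"
        let ?t = "T F" and ?t' = "T F'"
        have eq: "replF e ?t F' = Imp (replF e ?t (app A ?t')) (C F)"
          using T[OF F'] repl_app[OF eA] unfolding C_def by (metis replF.simps(3))
        have lc1: "lcF 0 (replF e ?t (app A ?t'))"
          using lc_repl app_lc eA elc T[OF F'] T[OF F] by metis
        have as: "derives L (insert (C F) (replF e ?t ` Gamma \<pi> e)) (C F)" by (rule derives.Assm) simp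
        show "derives L (insert (C F) (replF e ?t ` Gamma \<pi> e)) (replF e ?t F')"
          unfolding eq using mp2[OF dK[OF il Clc[OF F] lc1] as] .
      qed
      show "\<forall>F\<in>Lam. derives L {Neg (C F)} (Neg (Neg F))"
      proof
        fix F assume F: "F \<in> Lam"
        have lcH: "\<forall>h\<in>{Neg (C F)}. lcF 0 h" using Clc[OF F] by (simp add: Neg_def)
        have as: "derives L {Neg (C F)} (Neg (C F))" by (rule derives.Assm) simp
        have "derives L {Neg (C F)} (Imp (C F) (app A e))"
          using neg_imp[OF il lcH Clc[OF F] eAlc as] .
        then have d: "derives L {Neg (C F)} F" using T[OF F] unfolding C_def by metis
        have "lcF 0 F" using F CFlc unfolding Lam_def by blast
        then show "derives L {Neg (C F)} (Neg (Neg F))" using nnI[OF il lcH _ d] by blast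
      qed
    qed
  next
    case False
    then have TA: "e = Tau A" using eA by blast
    have bel: "\<exists>t. lcT 0 t \<and> F = Imp (app A e) (app A t)" if "F \<in> Lam" for F
      using that TA unfolding Lam_def belongs_def by auto
    define T where "T F = (SOME t. lcT 0 t \<and> F = Imp (app A e) (app A t))" for F
    have T: "lcT 0 (T F) \<and> F = Imp (app A e) (app A (T F))" if "F \<in> Lam" for F
      unfolding T_def using someI_ex[OF bel[OF that]] .
    define C where "C F = Neg (app A (T F))" for F
    have Xlc: "lcF 0 (app A (T F))" if "F \<in> Lam" for F
      using app_lc eA elc T[OF that] by metis
    have Clc: "lcF 0 (C F)" if "F \<in> Lam" for F
      unfolding C_def using Xlc[OF that] by (simp add: Neg_def)
    show ?thesis
    proof (rule core[OF il kc der endD elc Lam_def])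
      show "\<forall>F\<in>Lam. lcT 0 (T F)" using T by blast
      show "\<forall>F\<in>Lam. lcF 0 (C F)" using Clc by blast
      show "\<forall>F\<in>Lam. \<forall>F'\<in>Lam. derives L (insert (C F) (replF e (T F) ` Gamma \<pi> e)) (replF e (T F) F')"
      proof (intro ballI)
        fix F F' assume F: "F \<in> Lam" and F': "F' \<in> Lam"
        let ?t = "T F" and ?t' = "T F'"
        let ?H = "insert (C F) (replF e ?t ` Gamma \<pi> e)"
        have eq: "replF e ?t F' = Imp (app A ?t) (replF e ?t (app A ?t'))"
          using T[OF F'] repl_app[OF eA] by (metis replF.simps(3))
        have lc1: "lcF 0 (replF e ?t (app A ?t'))"
          using lc_repl app_lc eA elc T[OF F'] T[OF F] by metis
        have lcH: "\<forall>h\<in>?H. lcF 0 h" using Clc[OF F] Glc T[OF F] by blast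
        have as: "derives L ?H (Neg (app A ?t))" unfolding C_def by (rule derives.Assm) simp
        show "derives L ?H (replF e ?t F')"
          unfolding eq using neg_imp[OF il lcH Xlc[OF F] lc1 as] .
      qed
      show "\<forall>F\<in>Lam. derives L {Neg (C F)} (Neg (Neg F))"
      proof
        fix F assume F: "F \<in> Lam"
        have lcH: "\<forall>h\<in>{Neg (C F)}. lcF 0 h" using Clc[OF F] by (simp add: Neg_def)
        have as: "derives L {Neg (C F)} (Neg (Neg (app A (T F))))" unfolding C_def by (rule derives.Assm) simp
        have "derives L {Neg (C F)} (Neg (Neg (Imp (app A e) (app A (T F)))))"
          using nnImp[OF il lcH Xlc[OF F] eAlc as] .
        then show "derives L {Neg (C F)} (Neg (Neg F))" using T[OF F] by metis
      qed
    qed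
  qed
qed


end
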